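(* Let $N$ be a positive integer and let $f:\mathbb{N}\to\mathbb{C}$ be periodic with period $N$. Let $a_n(q)$ be the sequence of polynomials in $q$ defined recursively by \[ a_0(q)=0,\qquad a_n(q) = f(n) + \left(1-q^{n-1}\right)a_{n-1}(q) \quad \text{for } n\in\mathbb{N}. \] Set $\zeta_N:=e^{2\pi i/N}$ and, for integers $k$, \[ c_k := \frac{1}{N}\sum_{1\le j\le N} f(j)\,\zeta_N^{(1-j)k}. \] Then for $q\in\mathbb{C}$ with $|q|<1$ the limit below exists and \[ \lim_{n\rightarrow\infty}\left( \sum_{1\le\ell\le n} f(\ell) - a_n(q)\right) = c_0S_0(q) - (q;q)_\infty \sum_{1\le k\le N-1} \frac{c_k}{(\zeta_N^k;q)_\infty} + \sum_{1\le k\le N-1} \frac{c_k}{1-\zeta_N^k}. \]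
   Context: For $n\in\mathbb{N}_0\cup\{\infty\}$, $(a;q)_n := \prod_{j=0}^{n-1}(1-aq^j)$. $S_0(q):=\sum_{n\ge1}\sigma_0(n)q^n$, where $\sigma_0(n)=\sum_{d\mid n}1$ is the number of positive divisors of $n$. *)

theory Defs
  imports "HOL-Analysis.Analysis"
begin

fun a_seq :: "(nat \<Rightarrow> complex) \<Rightarrow> complex \<Rightarrow> nat \<Rightarrow> complex" where
  "a_seq f q 0 = 0"
| "a_seq f q (Suc n) = f (Suc n) + (1 - q ^ n) * a_seq f q n"

definition qpoch_inf :: "complex \<Rightarrow> complex \<Rightarrow> complex" where
  "qpoch_inf a q = (\<Prod>j. (1 - a * q ^ j))"

definition sigma0 :: "nat \<Rightarrow> nat" where
  "sigma0 n = card {d. d dvd n}"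

definition S0 :: "complex \<Rightarrow> complex" where
  "S0 q = (\<Sum>n. of_nat (sigma0 (Suc n)) * q ^ (Suc n))"

definition zetaN :: "nat \<Rightarrow> complex" where
  "zetaN N = exp (2 * of_real pi * \<i> / of_nat N)"

definition cN :: "(nat \<Rightarrow> complex) \<Rightarrow> nat \<Rightarrow> int \<Rightarrow> complex" where
  "cN f N k = (1 / of_nat N) * (\<Sum>j=1..N. f j * zetaN N powi ((1 - int j) * k))"

end

theory Submission
  imports Defs
begin
lemma summable_n_pow:
  fixes r :: real assumes "0 \<le> r" "r < 1"
  shows "summable (\<lambda>n. real n * r ^ n)"
proof -
  define s where "s = sqrt r"
  have s0: "0 \<le> s" "s < 1" using assms by (auto simp: s_def)
  have "(\<lambda>n. of_nat n * s ^ n) \<longlonglongrightarrow> (0::real)"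
    by (rule powser_times_n_limit_0) (use s0 in auto)
  then have "eventually (\<lambda>n. of_nat n * s ^ n < (1::real)) sequentially"
    by (rule order_tendstoD(2)) simp
  then obtain M where M: "\<And>n. n \<ge> M \<Longrightarrow> of_nat n * s ^ n < (1::real)"
    by (auto simp: eventually_sequentially)
  have rs: "r ^ n = s ^ n * s ^ n" for n
    using assms by (simp add: s_def power_mult_distrib[symmetric])
  show ?thesis
  proof (rule summable_comparison_test[OF _ summable_geometric[of s]])
    show "\<exists>N. \<forall>n\<ge>N. norm (real n * r ^ n) \<le> s ^ n"
    proof (intro exI allI impI)
      fix n assume "n \<ge> M"
      then have "real n * s ^ n \<le> 1" using M[of n] s0 by simp
      then have "real n * s ^ n * s ^ n \<le> s ^ n" using s0
        by (metis mult_left_le_one_le mult.commute zero_le_power mult_nonneg_nonneg of_nat_0_le_iff)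
      then show "norm (real n * r ^ n) \<le> s ^ n" using assms s0 by (simp add: rs mult.assoc)
    qed
  qed (use s0 in auto)
qed

definition Pq :: "complex \<Rightarrow> nat \<Rightarrow> complex" where
  "Pq q n = (\<Prod>i<n. 1 - q ^ Suc i)"
definition Wq :: "complex \<Rightarrow> complex \<Rightarrow> complex" where
  "Wq q z = (\<Sum>m. (1 / Pq q m) * z ^ m)"
definition Uq :: "complex \<Rightarrow> complex \<Rightarrow> complex" where
  "Uq q z = (\<Sum>m. (of_nat m / Pq q m) * z ^ m)"
definition Sq :: "complex \<Rightarrow> nat \<Rightarrow> complex \<Rightarrow> complex" where
  "Sq q n z = (\<Sum>m\<le>n. (1 / Pq q m) * z ^ m)"
definition Tq :: "complex \<Rightarrow> nat \<Rightarrow> complex \<Rightarrow> complex" where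
  "Tq q n z = (\<Sum>m\<le>n. (of_nat m / Pq q m) * z ^ m)"
definition Qz :: "complex \<Rightarrow> complex \<Rightarrow> nat \<Rightarrow> complex" where
  "Qz z q k = (\<Prod>i<k. 1 - z * q ^ i)"

lemma Pq_0 [simp]: "Pq q 0 = 1" by (simp add: Pq_def)
lemma Pq_Suc: "Pq q (Suc n) = Pq q n * (1 - q ^ Suc n)" by (simp add: Pq_def)
lemma Sq_0 [simp]: "Sq q 0 z = 1" by (simp add: Sq_def)
lemma Sq_Suc: "Sq q (Suc n) z = Sq q n z + z ^ Suc n / Pq q (Suc n)" by (simp add: Sq_def)
lemma Tq_0 [simp]: "Tq q 0 z = 0" by (simp add: Tq_def)
lemma Tq_Suc: "Tq q (Suc n) z = Tq q n z + of_nat (Suc n) * z ^ Suc n / Pq q (Suc n)" by (simp add: Tq_def)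

context
  fixes q :: complex
  assumes q1: "norm q < 1"
begin

lemma normpow_lt1: "norm (q ^ Suc i) < 1"
proof -
  have "norm q ^ i \<le> 1" using q1 by (intro power_le_one) auto
  hence "norm q * norm q ^ i \<le> norm q" by (simp add: mult_left_le)
  then show ?thesis using q1 by (simp add: norm_power norm_mult)
qed

lemma one_minus_nz: "1 - q ^ Suc i \<noteq> 0"
  using normpow_lt1[of i] by (metis norm_one right_minus_eq less_irrefl)

lemma Pq_nz: "Pq q n \<noteq> 0"
proof (induction n)
  case (Suc n) then show ?case by (metis Pq_Suc mult_eq_0_iff one_minus_nz)
qed simp

lemma Pq_lim: "\<exists>L. Pq q \<longlonglongrightarrow> L \<and> L \<noteq> 0"
proof -
  have "summable (\<lambda>i. norm q * norm q ^ i)" using q1 by (intro summable_mult summable_geometric) auto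
  then have "summable (\<lambda>i. norm ((1 - q ^ Suc i) - 1))"
    by (simp add: norm_mult norm_power)
  then have "abs_convergent_prod (\<lambda>i. 1 - q ^ Suc i)"
    by (rule summable_imp_abs_convergent_prod)
  then have "convergent_prod (\<lambda>i. 1 - q ^ Suc i)"
    by (rule abs_convergent_prod_imp_convergent_prod)
  then obtain L where L: "(\<lambda>n. \<Prod>i\<le>n. 1 - q ^ Suc i) \<longlonglongrightarrow> L" "L \<noteq> 0"
    using convergent_prod_iff_nz_lim[of "\<lambda>i. 1 - q ^ Suc i"] one_minus_nz by blast
  then have "(\<lambda>n. \<Prod>i<n. 1 - q ^ Suc i) \<longlonglongrightarrow> L"
    using LIMSEQ_lessThan_iff_atMost by blast
  then show ?thesis using L unfolding Pq_def by (metis (no_types) ext)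
qed

lemma invPq_bound: "\<exists>B>0. \<forall>m. norm (1 / Pq q m) \<le> B"
proof -
  obtain L where L: "Pq q \<longlonglongrightarrow> L" "L \<noteq> 0" using Pq_lim by blast
  have "(\<lambda>m. 1 / Pq q m) \<longlonglongrightarrow> 1 / L" by (intro tendsto_intros L)
  then have "Bseq (\<lambda>m. 1 / Pq q m)" by (intro convergent_imp_Bseq convergentI)
  then show ?thesis by (auto simp: Bseq_def)
qed

lemma summable_W: "norm z < 1 \<Longrightarrow> summable (\<lambda>m. norm ((1 / Pq q m) * z ^ m))"
proof -
  assume z: "norm z < 1"
  obtain B where B: "B > 0" "\<And>m. norm (1 / Pq q m) \<le> B" using invPq_bound by blast
  show ?thesis
  proof (rule summable_comparison_test[OF _ summable_mult[OF summable_geometric[of "norm z"], of B]])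
    show "\<exists>N. \<forall>n\<ge>N. norm (norm (1 / Pq q n * z ^ n)) \<le> B * norm z ^ n"
    proof (intro exI allI impI)
      fix n :: nat
      have "norm (1 / Pq q n * z ^ n) = norm (1 / Pq q n) * norm z ^ n"
        by (simp add: norm_mult norm_power norm_divide)
      also have "\<dots> \<le> B * norm z ^ n"
        using B by (intro mult_right_mono) auto
      finally show "norm (norm (1 / Pq q n * z ^ n)) \<le> B * norm z ^ n" by simp
    qed
  qed (use z in auto)
qed

lemma summable_U: "norm z < 1 \<Longrightarrow> summable (\<lambda>m. norm ((of_nat m / Pq q m) * z ^ m))"
proof -
  assume z: "norm z < 1"
  obtain B where B: "B > 0" "\<And>m. norm (1 / Pq q m) \<le> B" using invPq_bound by blast
  show ?thesis
  proof (rule summable_comparison_test[OF _ summable_mult[OF summable_n_pow[of "norm z"], of B]])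
    show "\<exists>N. \<forall>n\<ge>N. norm (norm (of_nat n / Pq q n * z ^ n)) \<le> B * (real n * norm z ^ n)"
    proof (intro exI allI impI)
      fix n :: nat
      have "norm (of_nat n / Pq q n * z ^ n) = real n * norm (1 / Pq q n) * norm z ^ n"
        by (simp add: norm_mult norm_power norm_divide)
      also have "\<dots> \<le> real n * B * norm z ^ n"
        using B by (intro mult_right_mono mult_left_mono) auto
      finally show "norm (norm (of_nat n / Pq q n * z ^ n)) \<le> B * (real n * norm z ^ n)"
        by (simp add: algebra_simps)
    qed
  qed (use z in auto)
qed

lemma W_eq: "Wq q = (\<lambda>z. \<Sum>m. (1 / Pq q m) * z ^ m)" by (rule ext) (simp add: Wq_def)
lemma U_eq: "Uq q = (\<lambda>z. \<Sum>m. (of_nat m / Pq q m) * z ^ m)" by (rule ext) (simp add: Uq_def)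

lemma W_cont: "isCont (Wq q) 0"
  unfolding W_eq
  by (rule isCont_powser[where K="1/2"]) (use summable_W[of "1/2"] in \<open>auto dest: summable_norm_cancel\<close>)

lemma U_cont: "isCont (Uq q) 0"
  unfolding U_eq
  by (rule isCont_powser[where K="1/2"]) (use summable_U[of "1/2"] in \<open>auto dest: summable_norm_cancel\<close>)

lemma W_0: "Wq q 0 = 1" unfolding Wq_def by (subst powser_zero) simp
lemma U_0: "Uq q 0 = 0" unfolding Uq_def by (subst powser_zero) simp

end

lemma alg1: assumes "(p::complex) \<noteq> 0" "s \<noteq> 0" "s = 1 - t" shows
  "(1 - x) * X / (p * s) - X / p = t * X / (p * s) - x * X / (p * s)"
proof - have t: "t = 1 - s" using assms by simp
  show ?thesis unfolding t using assms(1,2) by (simp add: field_simps) qed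

lemma alg2: assumes "(p::complex) \<noteq> 0" "s \<noteq> 0" "s = 1 - t" shows
  "(1 - z) * (c * X / (p * s)) = c * (t * X) / (p * s) + z * (X / (p * s))
     - (c + 1) * (z * X) / (p * s) + c * X / p"
proof - have t: "t = 1 - s" using assms by simp
  show ?thesis unfolding t using assms(1,2) by (simp add: field_simps) qed

lemma alg3: assumes "(p::complex) \<noteq> 0" "s \<noteq> 0" "s = 1 - t" shows
  "(c + 1) / (p * s) = c / p + 1 / (p * s) + c * t / (p * s)"
proof - have t: "t = 1 - s" using assms by simp
  show ?thesis unfolding t using assms(1,2) by (simp add: field_simps) qed

lemma F1: assumes q1: "norm q < 1"
  shows "(1 - x) * Sq q n x = Sq q n (q * x) - x ^ Suc n / Pq q n"
proof (induction n)
  case 0 then show ?case by simp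
next
  case (Suc n)
  have e1: "(q * x) ^ Suc n = q ^ Suc n * x ^ Suc n" by (simp add: power_mult_distrib)
  have e2: "x ^ Suc (Suc n) = x * x ^ Suc n" by simp
  have key: "(1 - x) * x ^ Suc n / Pq q (Suc n) - x ^ Suc n / Pq q n
      = (q * x) ^ Suc n / Pq q (Suc n) - x ^ Suc (Suc n) / Pq q (Suc n)"
    unfolding Pq_Suc e1 e2 by (rule alg1[OF Pq_nz[OF q1] one_minus_nz[OF q1] refl])
  have "(1 - x) * Sq q (Suc n) x = (1 - x) * Sq q n x + (1 - x) * x ^ Suc n / Pq q (Suc n)"
    by (simp add: Sq_Suc algebra_simps)
  also have "\<dots> = Sq q n (q * x) + ((1 - x) * x ^ Suc n / Pq q (Suc n) - x ^ Suc n / Pq q n)"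
    using Suc by simp
  also have "\<dots> = Sq q (Suc n) (q * x) - x ^ Suc (Suc n) / Pq q (Suc n)"
    unfolding key by (simp add: Sq_Suc)
  finally show ?case .
qed

lemma F2: assumes q1: "norm q < 1"
  shows "(1 - z) * Tq q n z = Tq q n (q * z) + z * Sq q n z - of_nat (Suc n) * z ^ Suc n / Pq q n"
proof (induction n)
  case 0 then show ?case by simp
next
  case (Suc n)
  have e1: "(q * z) ^ Suc n = q ^ Suc n * z ^ Suc n" by (simp add: power_mult_distrib)
  have e2: "z ^ Suc (Suc n) = z * z ^ Suc n" by simp
  have e3: "(of_nat (Suc (Suc n)) :: complex) = of_nat (Suc n) + 1" by simp
  have key: "(1 - z) * (of_nat (Suc n) * z ^ Suc n / Pq q (Suc n)) =
     of_nat (Suc n) * (q * z) ^ Suc n / Pq q (Suc n) + z * (z ^ Suc n / Pq q (Suc n))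
     - of_nat (Suc (Suc n)) * z ^ Suc (Suc n) / Pq q (Suc n) + of_nat (Suc n) * z ^ Suc n / Pq q n"
    unfolding Pq_Suc e1 e2 e3 by (rule alg2[OF Pq_nz[OF q1] one_minus_nz[OF q1] refl])
  show ?case
    unfolding Tq_Suc Sq_Suc distrib_left key using Suc by (simp add: algebra_simps)
qed

lemma F3: assumes q1: "norm q < 1"
  shows "of_nat (Suc n) / Pq q n = Sq q n 1 + Tq q n q"
proof (induction n)
  case 0 then show ?case by simp
next
  case (Suc n)
  have e3: "(of_nat (Suc (Suc n)) :: complex) = of_nat (Suc n) + 1" by simp
  have key: "of_nat (Suc (Suc n)) / Pq q (Suc n) = of_nat (Suc n) / Pq q n
     + 1 / Pq q (Suc n) + of_nat (Suc n) * q ^ Suc n / Pq q (Suc n)"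
    unfolding Pq_Suc e3 by (rule alg3[OF Pq_nz[OF q1] one_minus_nz[OF q1] refl])
  show ?case unfolding key Suc Sq_Suc Tq_Suc by simp
qed

lemma a_closed: assumes q1: "norm q < 1"
  shows "a_seq (\<lambda>l. x ^ (l - 1)) q (Suc n) = Pq q n * Sq q n x"
proof (induction n)
  case 0 then show ?case by simp
next
  case (Suc n)
  have n1: "Pq q (Suc n) \<noteq> 0" using Pq_nz[OF q1] by auto
  have "a_seq (\<lambda>l. x ^ (l - 1)) q (Suc (Suc n)) = x ^ Suc n + (1 - q ^ Suc n) * (Pq q n * Sq q n x)"
    using Suc by simp
  also have "\<dots> = Pq q (Suc n) * Sq q n x + x ^ Suc n"
    by (simp add: Pq_Suc algebra_simps)
  also have "\<dots> = Pq q (Suc n) * Sq q (Suc n) x"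
    using n1 by (simp add: Sq_Suc distrib_left)
  finally show ?case .
qed

lemma geom_fin: "(1 - x) * (\<Sum>l=1..Suc n. (x::complex) ^ (l - 1)) = 1 - x ^ Suc n"
proof (induction n)
  case 0 then show ?case by simp
next
  case (Suc n)
  have h: "(\<Sum>l=1..Suc (Suc n). x ^ (l - 1)) = (\<Sum>l=1..Suc n. x ^ (l - 1)) + x ^ Suc n" by simp
  have "(1 - x) * (\<Sum>l=1..Suc (Suc n). x ^ (l - 1)) = (1 - x) * (\<Sum>l=1..Suc n. x ^ (l - 1)) + (1 - x) * x ^ Suc n"
    by (simp only: h distrib_left)
  also have "\<dots> = 1 - x ^ Suc n + (1 - x) * x ^ Suc n" by (simp only: Suc.IH)
  also have "\<dots> = 1 - x ^ Suc (Suc n)" by (simp add: algebra_simps)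
  finally show ?case .
qed

definition Rq :: "complex \<Rightarrow> complex \<Rightarrow> complex" where "Rq q z = Uq q z / Wq q z"

context
  fixes q :: complex
  assumes q1: "norm q < 1"
begin

lemma Sq_lim: "norm z < 1 \<Longrightarrow> (\<lambda>n. Sq q n z) \<longlonglongrightarrow> Wq q z"
  unfolding Sq_def Wq_def
  by (rule summable_LIMSEQ') (rule summable_norm_cancel[OF summable_W[OF q1]])

lemma Tq_lim: "norm z < 1 \<Longrightarrow> (\<lambda>n. Tq q n z) \<longlonglongrightarrow> Uq q z"
  unfolding Tq_def Uq_def
  by (rule summable_LIMSEQ') (rule summable_norm_cancel[OF summable_U[OF q1]])

lemma Pq_lim': obtains L where "Pq q \<longlonglongrightarrow> L" "L \<noteq> 0"
  using Pq_lim[OF q1] by blast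

lemma invPq_lim: obtains L where "(\<lambda>n. 1 / Pq q n) \<longlonglongrightarrow> L"
proof -
  obtain L where "Pq q \<longlonglongrightarrow> L" "L \<noteq> 0" by (rule Pq_lim')
  then have "(\<lambda>n. 1 / Pq q n) \<longlonglongrightarrow> 1 / L" by (intro tendsto_intros)
  then show ?thesis using that by blast
qed

lemma normqz: "norm z < 1 \<Longrightarrow> norm (q * z) < 1"
proof -
  assume z: "norm z < 1"
  have "norm (q * z) = norm q * norm z" by (simp add: norm_mult)
  also have "\<dots> \<le> norm z" using q1 by (intro mult_left_le_one_le) auto
  finally show ?thesis using z by simp
qed

lemma W_func: assumes z: "norm z < 1" shows "(1 - z) * Wq q z = Wq q (q * z)"
proof -
  obtain L where L: "(\<lambda>n. 1 / Pq q n) \<longlonglongrightarrow> L" by (rule invPq_lim)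
  have "(\<lambda>n. z ^ Suc n) \<longlonglongrightarrow> 0"
    using LIMSEQ_power_zero[OF z] by (rule LIMSEQ_Suc)
  then have t0: "(\<lambda>n. z ^ Suc n * (1 / Pq q n)) \<longlonglongrightarrow> 0 * L" by (intro tendsto_mult L)
  have "(\<lambda>n. (1 - z) * Sq q n z) \<longlonglongrightarrow> (1 - z) * Wq q z"
    by (intro tendsto_intros Sq_lim z)
  moreover have "(\<lambda>n. (1 - z) * Sq q n z) = (\<lambda>n. Sq q n (q * z) - z ^ Suc n * (1 / Pq q n))"
    using F1[OF q1] by simp
  moreover have "(\<lambda>n. Sq q n (q * z) - z ^ Suc n * (1 / Pq q n)) \<longlonglongrightarrow> Wq q (q * z) - 0 * L"
    by (intro tendsto_intros Sq_lim normqz z t0)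
  ultimately show ?thesis using LIMSEQ_unique by fastforce
qed

lemma U_func: assumes z: "norm z < 1" shows "(1 - z) * Uq q z = Uq q (q * z) + z * Wq q z"
proof -
  obtain L where L: "(\<lambda>n. 1 / Pq q n) \<longlonglongrightarrow> L" by (rule invPq_lim)
  have "(\<lambda>n. of_nat (Suc n) * z ^ Suc n) \<longlonglongrightarrow> 0"
    using powser_times_n_limit_0[OF z] by (rule LIMSEQ_Suc)
  then have t0: "(\<lambda>n. of_nat (Suc n) * z ^ Suc n * (1 / Pq q n)) \<longlonglongrightarrow> 0 * L" by (intro tendsto_mult L)
  have "(\<lambda>n. (1 - z) * Tq q n z) \<longlonglongrightarrow> (1 - z) * Uq q z"
    by (intro tendsto_intros Tq_lim z)
  moreover have "(\<lambda>n. (1 - z) * Tq q n z) = (\<lambda>n. Tq q n (q * z) + z * Sq q n z - of_nat (Suc n) * z ^ Suc n * (1 / Pq q n))"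
    using F2[OF q1] by simp
  moreover have "(\<lambda>n. Tq q n (q * z) + z * Sq q n z - of_nat (Suc n) * z ^ Suc n * (1 / Pq q n)) \<longlonglongrightarrow> Uq q (q * z) + z * Wq q z - 0 * L"
    by (intro tendsto_intros Tq_lim Sq_lim normqz z t0)
  ultimately show ?thesis using LIMSEQ_unique by fastforce
qed

lemma normqk: "norm z < 1 \<Longrightarrow> norm (q ^ k * z) < 1"
  by (induction k) (auto simp: mult.assoc intro: normqz)

lemma WQ: assumes z: "norm z < 1" shows "Wq q z * Qz z q k = Wq q (q ^ k * z)"
proof (induction k)
  case 0 then show ?case by (simp add: Qz_def)
next
  case (Suc k)
  have "Wq q z * Qz z q (Suc k) = (Wq q z * Qz z q k) * (1 - q ^ k * z)"
    by (simp add: Qz_def algebra_simps)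
  also have "\<dots> = (1 - q ^ k * z) * Wq q (q ^ k * z)" using Suc by simp
  also have "\<dots> = Wq q (q * (q ^ k * z))" by (rule W_func[OF normqk[OF z]])
  finally show ?case by (simp add: mult.assoc)
qed

lemma qk_lim: "(\<lambda>k. q ^ k * z) \<longlonglongrightarrow> 0"
  using tendsto_mult_left_zero[OF LIMSEQ_power_zero[OF q1]] by simp

lemma W_qk_lim: "(\<lambda>k. Wq q (q ^ k * z)) \<longlonglongrightarrow> 1"
  using isCont_tendsto_compose[OF W_cont[OF q1] qk_lim] W_0[OF q1] by simp

lemma U_qk_lim: "(\<lambda>k. Uq q (q ^ k * z)) \<longlonglongrightarrow> 0"
  using isCont_tendsto_compose[OF U_cont[OF q1] qk_lim] U_0[OF q1] by simp

lemma W_nz: assumes z: "norm z < 1" shows "Wq q z \<noteq> 0"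
proof
  assume h: "Wq q z = 0"
  have "Wq q (q ^ k * z) = 0" for k using WQ[OF z, of k] h by simp
  then have "(\<lambda>k. Wq q (q ^ k * z)) \<longlonglongrightarrow> 0" by simp
  from LIMSEQ_unique[OF W_qk_lim this] show False by simp
qed

lemma Qz_lim: assumes z: "norm z < 1" shows "Qz z q \<longlonglongrightarrow> 1 / Wq q z"
proof -
  have "(\<lambda>k. Wq q (q ^ k * z) / Wq q z) \<longlonglongrightarrow> 1 / Wq q z"
    by (intro tendsto_divide W_qk_lim tendsto_const W_nz[OF z])
  moreover have "(\<lambda>k. Wq q (q ^ k * z) / Wq q z) = Qz z q"
    using WQ[OF z] W_nz[OF z] by (auto simp: field_simps)
  ultimately show ?thesis by simp
qed

lemma Pq_Qz: "Pq q = Qz q q" by (rule ext) (simp add: Pq_def Qz_def)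

lemma Pq_lim_W: "Pq q \<longlonglongrightarrow> 1 / Wq q q"
  using Qz_lim[OF q1] Pq_Qz by simp

lemma qpoch_q: "qpoch_inf q q = 1 / Wq q q"
proof -
  have "(\<lambda>n. \<Prod>k<n. 1 - q * q ^ k) \<longlonglongrightarrow> 1 / Wq q q"
    using Qz_lim[OF q1] unfolding Qz_def by simp
  then show ?thesis unfolding qpoch_inf_def
    by (rule prodinf_eq_prod_lim') (use W_nz[OF q1] in simp)
qed

lemma qpoch_x: assumes x: "norm x \<le> 1" "x \<noteq> 1"
  shows "qpoch_inf x q = (1 - x) / Wq q (q * x)"
proof -
  have qx: "norm (q * x) < 1"
  proof -
    have "norm (q * x) = norm q * norm x" by (simp add: norm_mult)
    also have "\<dots> \<le> norm q" using x by (intro mult_left_le) auto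
    finally show ?thesis using q1 by simp
  qed
  have e: "Qz x q (Suc k) = (1 - x) * Qz (q * x) q k" for k
    unfolding Qz_def by (subst prod.lessThan_Suc_shift) (simp add: algebra_simps)
  have "(\<lambda>k. (1 - x) * Qz (q * x) q k) \<longlonglongrightarrow> (1 - x) * (1 / Wq q (q * x))"
    by (intro tendsto_intros Qz_lim qx)
  then have "(\<lambda>k. Qz x q (Suc k)) \<longlonglongrightarrow> (1 - x) / Wq q (q * x)" unfolding e by simp
  then have "Qz x q \<longlonglongrightarrow> (1 - x) / Wq q (q * x)" by (rule LIMSEQ_imp_Suc)
  then have "(\<lambda>n. \<Prod>k<n. 1 - x * q ^ k) \<longlonglongrightarrow> (1 - x) / Wq q (q * x)"
    unfolding Qz_def by simp
  then show ?thesis unfolding qpoch_inf_def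
    by (rule prodinf_eq_prod_lim') (use W_nz[OF qx] x in simp)
qed


lemma R_step: assumes z: "norm z < 1" shows "Rq q z = Rq q (q * z) + z / (1 - z)"
proof -
  have z1: "1 - z \<noteq> 0" using z by auto
  have w: "Wq q z \<noteq> 0" by (rule W_nz[OF z])
  have wq: "Wq q (q * z) = (1 - z) * Wq q z" using W_func[OF z] by simp
  have uq: "Uq q (q * z) = (1 - z) * Uq q z - z * Wq q z" using U_func[OF z] by simp
  have alg: "u / w = (s * u - z * w) / (s * w) + z / s" if "w \<noteq> 0" "s \<noteq> 0" for u w s :: complex
    using that by (simp add: field_simps)
  show ?thesis unfolding Rq_def wq uq by (rule alg[OF w z1])
qed

lemma R_sum: "Rq q q = (\<Sum>j<k. q ^ Suc j / (1 - q ^ Suc j)) + Rq q (q ^ Suc k)"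
proof (induction k)
  case 0 then show ?case by simp
next
  case (Suc k)
  have "Rq q (q ^ Suc k) = Rq q (q * q ^ Suc k) + q ^ Suc k / (1 - q ^ Suc k)"
    by (rule R_step) (rule normpow_lt1[OF q1])
  then show ?case using Suc by simp
qed

lemma R_lim0: "(\<lambda>k. Rq q (q ^ Suc k)) \<longlonglongrightarrow> 0"
proof -
  have "(\<lambda>k. Uq q (q ^ k * q) / Wq q (q ^ k * q)) \<longlonglongrightarrow> 0 / 1"
    by (intro tendsto_intros U_qk_lim W_qk_lim) simp
  then show ?thesis unfolding Rq_def power_Suc2 by simp
qed

lemma lambert_R: "(\<lambda>j. q ^ Suc j / (1 - q ^ Suc j)) sums Rq q q"
proof -
  have "(\<lambda>k. Rq q q - Rq q (q ^ Suc k)) \<longlonglongrightarrow> Rq q q - 0"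
    by (intro tendsto_intros R_lim0)
  moreover have "(\<Sum>j<k. q ^ Suc j / (1 - q ^ Suc j)) = Rq q q - Rq q (q ^ Suc k)" for k
    using R_sum[of k] by (metis add_diff_cancel_right')
  ultimately show ?thesis unfolding sums_def by simp
qed

end

lemma card_F: "card {(i, j). Suc i * Suc j = Suc n} = sigma0 (Suc n)"
proof -
  let ?F = "{(i, j). Suc i * Suc j = Suc n}"
  have inj: "inj_on (\<lambda>(i, j). Suc i) ?F"
  proof (rule inj_onI)
    fix x y assume "x \<in> ?F" "y \<in> ?F" "(\<lambda>(i, j). Suc i) x = (\<lambda>(i, j). Suc i) y"
    then show "x = y"
    proof (cases x, cases y)
      fix i j i' j' assume a: "x \<in> ?F" "y \<in> ?F" "(\<lambda>(i, j). Suc i) x = (\<lambda>(i, j). Suc i) y"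
        and x: "x = (i, j)" and y: "y = (i', j')"
      have h1: "Suc i * Suc j = Suc n" "Suc i' * Suc j' = Suc n" "i = i'" using a x y by auto
      then have "Suc j = Suc j'" by (metis mult_left_cancel nat.distinct(1))
      then show "x = y" using x y h1 by simp
    qed
  qed
  have img: "(\<lambda>(i, j). Suc i) ` ?F = {d. d dvd Suc n}"
  proof
    show "(\<lambda>(i, j). Suc i) ` ?F \<subseteq> {d. d dvd Suc n}"
    proof
      fix d assume "d \<in> (\<lambda>(i, j). Suc i) ` ?F"
      then obtain i j where "Suc i * Suc j = Suc n" "d = Suc i" by auto
      then show "d \<in> {d. d dvd Suc n}" by (metis dvd_triv_left mem_Collect_eq)
    qed
  next
    show "{d. d dvd Suc n} \<subseteq> (\<lambda>(i, j). Suc i) ` ?F"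
    proof
      fix d assume "d \<in> {d. d dvd Suc n}"
      then obtain k where k: "Suc n = d * k" by auto
      then have d0: "d > 0" "k > 0" by (auto intro: Nat.gr0I)
      then obtain d' k' where dk: "d = Suc d'" "k = Suc k'" by (metis gr0_implies_Suc)
      then have "(d', k') \<in> ?F" using k by simp
      moreover have "d = (\<lambda>(i, j). Suc i) (d', k')" using dk by simp
      ultimately show "d \<in> (\<lambda>(i, j). Suc i) ` ?F" by blast
    qed
  qed
  show ?thesis unfolding sigma0_def using card_image[OF inj] img by simp
qed

lemma finite_F: "finite {(i, j). Suc i * Suc j = Suc n}"
proof (rule finite_subset)
  show "{(i, j). Suc i * Suc j = Suc n} \<subseteq> {..n} \<times> {..n}"
  proof clarify
    fix i j assume h: "Suc i * Suc j = Suc n"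
    have "Suc i \<le> Suc i * Suc j" "Suc j \<le> Suc i * Suc j" by simp_all
    then show "i \<in> {..n} \<and> j \<in> {..n}" using h by simp
  qed
qed simp

context
  fixes q :: complex
  assumes q1: "norm q < 1"
begin

definition gq :: "nat \<times> nat \<Rightarrow> complex" where "gq p = q ^ (Suc (fst p) * Suc (snd p))"

lemma gq_summable: "gq summable_on (UNIV \<times> UNIV)"
proof -
  define r where "r = norm q"
  have r: "0 \<le> r" "r < 1" using q1 by (auto simp: r_def)
  define h where "h p = r ^ (fst p + snd p)" for p :: "nat \<times> nat"
  have inner: "((\<lambda>j. h (i, j)) has_sum (r ^ i / (1 - r))) UNIV" for i
  proof -
    have "(\<lambda>j. r ^ i * r ^ j) sums (r ^ i * (1 / (1 - r)))"
      by (intro sums_mult geometric_sums) (use r in auto)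
    then have "(\<lambda>j. h (i, j)) sums (r ^ i / (1 - r))" by (simp add: h_def power_add)
    then show ?thesis by (rule sums_nonneg_imp_has_sum) (use r in \<open>auto simp: h_def\<close>)
  qed
  have outer: "(\<lambda>i. r ^ i / (1 - r)) summable_on UNIV"
  proof (rule norm_summable_imp_summable_on)
    show "summable (\<lambda>n. norm (r ^ n / (1 - r)))"
      using summable_divide[OF summable_geometric[of r], of "1 - r"] r by simp
  qed
  have hs: "h summable_on Sigma UNIV (\<lambda>_. UNIV)"
    by (rule summable_on_SigmaI[OF inner outer]) (use r in \<open>auto simp: h_def\<close>)
  have hn: "(\<lambda>p. norm (h p)) = h" by (rule ext) (simp add: h_def r)
  have "(\<lambda>p. norm (h p)) summable_on (UNIV \<times> UNIV)"
    using hs unfolding hn by simp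
  then have "(\<lambda>p. norm (gq p)) summable_on (UNIV \<times> UNIV)"
  proof (rule Infinite_Sum.abs_summable_on_comparison_test)
    fix p :: "nat \<times> nat" assume "p \<in> UNIV \<times> UNIV"
    obtain i j where p: "p = (i, j)" by (cases p)
    have le: "i + j \<le> Suc i * Suc j" by simp
    have "norm (gq p) = r ^ (Suc i * Suc j)"
      unfolding gq_def p fst_conv snd_conv r_def norm_power by (rule refl)
    also have "\<dots> \<le> r ^ (i + j)" by (rule power_decreasing[OF le]) (use r in auto)
    finally show "norm (gq p) \<le> norm (h p)" using r by (simp add: h_def p)
  qed
  then show ?thesis by (rule Infinite_Sum.abs_summable_summable)
qed

lemma lambert_S0: "(\<lambda>j. q ^ Suc j / (1 - q ^ Suc j)) sums S0 q"
proof -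
  define S where "S = infsum gq (UNIV \<times> UNIV)"
  have hsS: "(gq has_sum S) (Sigma UNIV (\<lambda>_. UNIV))"
    unfolding S_def using gq_summable by (simp add: has_sum_infsum)
  have inner: "((\<lambda>j. gq (i, j)) has_sum (q ^ Suc i / (1 - q ^ Suc i))) UNIV" for i
  proof -
    let ?c = "q ^ Suc i"
    have c1: "norm ?c < 1" by (rule normpow_lt1[OF q1])
    have "(\<lambda>j. ?c * ?c ^ j) sums (?c * (1 / (1 - ?c)))"
      by (intro sums_mult geometric_sums c1)
    moreover have geq: "(\<lambda>j. gq (i, j)) = (\<lambda>j. ?c * ?c ^ j)"
    proof (rule ext)
      fix j
      have "Suc i * Suc j = Suc i + Suc i * j" by simp
      then show "gq (i, j) = ?c * ?c ^ j" unfolding gq_def fst_conv snd_conv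
        by (metis power_add power_mult)
    qed
    ultimately have sm: "(\<lambda>j. gq (i, j)) sums (?c / (1 - ?c))" by simp
    have "summable (\<lambda>j. norm ?c * norm ?c ^ j)"
      by (intro summable_mult summable_geometric) (use c1 in auto)
    moreover have geq': "gq (i, j) = ?c * ?c ^ j" for j using geq by metis
    ultimately have "summable (\<lambda>j. norm (gq (i, j)))"
      by (simp only: geq' norm_mult norm_power)
    then show ?thesis by (rule norm_summable_imp_has_sum[OF _ sm])
  qed
  have s1: "((\<lambda>i. q ^ Suc i / (1 - q ^ Suc i)) has_sum S) UNIV"
    by (rule has_sum_SigmaD[OF hsS]) (use inner in auto)
  define F where "F n = {(i, j). Suc i * Suc j = Suc n}" for n
  define hm where "hm p = (Suc (fst p) * Suc (snd p) - 1, p)" for p :: "nat \<times> nat"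
  have inj: "inj_on hm (UNIV \<times> UNIV)" by (rule inj_onI) (simp add: hm_def)
  have img: "hm ` (UNIV \<times> UNIV) = Sigma UNIV F"
  proof
    show "hm ` (UNIV \<times> UNIV) \<subseteq> Sigma UNIV F" by (auto simp: hm_def F_def)
  next
    show "Sigma UNIV F \<subseteq> hm ` (UNIV \<times> UNIV)"
    proof clarify
      fix n i j assume "(i, j) \<in> F n"
      then have "Suc i * Suc j = Suc n" by (simp add: F_def)
      then have "(n, i, j) = hm (i, j)" by (simp add: hm_def)
      then show "(n, i, j) \<in> hm ` (UNIV \<times> UNIV)" by blast
    qed
  qed
  have "((\<lambda>x. gq (snd x)) \<circ> hm) = gq" by (rule ext) (simp add: hm_def)
  then have "(((\<lambda>x. gq (snd x)) \<circ> hm) has_sum S) (UNIV \<times> UNIV)" using hsS by simp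
  then have hs2: "((\<lambda>x. gq (snd x)) has_sum S) (Sigma UNIV F)"
    using has_sum_reindex[OF inj] img by metis
  have inner2: "((\<lambda>p. gq (snd (n, p))) has_sum (of_nat (sigma0 (Suc n)) * q ^ Suc n)) (F n)" for n
  proof (rule has_sum_finiteI)
    show "finite (F n)" unfolding F_def by (rule finite_F)
    have "(\<Sum>p\<in>F n. gq (snd (n, p))) = (\<Sum>p\<in>F n. q ^ Suc n)"
      by (rule sum.cong) (auto simp: F_def gq_def)
    also have "\<dots> = of_nat (card (F n)) * q ^ Suc n" by simp
    finally show "of_nat (sigma0 (Suc n)) * q ^ Suc n = (\<Sum>p\<in>F n. gq (snd (n, p)))"
      unfolding F_def card_F by simp
  qed
  have s2: "((\<lambda>n. of_nat (sigma0 (Suc n)) * q ^ Suc n) has_sum S) UNIV"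
    by (rule has_sum_SigmaD[OF hs2]) (use inner2 in auto)
  have "S0 q = S" unfolding S0_def using has_sum_imp_sums[OF s2] by (simp add: sums_iff)
  then show ?thesis using has_sum_imp_sums[OF s1] by simp
qed

end

lemma alg5: assumes "(a::complex) \<noteq> 0" "b \<noteq> 0" "s \<noteq> 0"
  shows "(1 - (1 / a) * b) / s = 1 / s - (1 / a) / (s / b)"
  using assms by (simp add: field_simps)

context
  fixes q :: complex
  assumes q1: "norm q < 1"
begin

lemma E_lim_x: assumes x: "norm x \<le> 1" "x \<noteq> 1"
  shows "(\<lambda>n. (\<Sum>l=1..n. x ^ (l - 1)) - a_seq (\<lambda>l. x ^ (l - 1)) q n) \<longlonglongrightarrow>
           1 / (1 - x) - qpoch_inf q q / qpoch_inf x q"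
proof -
  have x1: "1 - x \<noteq> 0" using x by simp
  have qx: "norm (q * x) < 1"
  proof -
    have "norm (q * x) = norm q * norm x" by (simp add: norm_mult)
    also have "\<dots> \<le> norm q" using x by (intro mult_left_le) auto
    finally show ?thesis using q1 by simp
  qed
  have eq: "(\<Sum>l=1..Suc n. x ^ (l - 1)) - a_seq (\<lambda>l. x ^ (l - 1)) q (Suc n)
      = (1 - Pq q n * Sq q n (q * x)) / (1 - x)" for n
  proof -
    have P: "Pq q n \<noteq> 0" by (rule Pq_nz[OF q1])
    have "(1 - x) * ((\<Sum>l=1..Suc n. x ^ (l - 1)) - a_seq (\<lambda>l. x ^ (l - 1)) q (Suc n))
        = (1 - x) * (\<Sum>l=1..Suc n. x ^ (l - 1)) - Pq q n * ((1 - x) * Sq q n x)"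
      unfolding a_closed[OF q1] by (simp add: algebra_simps)
    also have "\<dots> = (1 - x ^ Suc n) - Pq q n * (Sq q n (q * x) - x ^ Suc n / Pq q n)"
      unfolding geom_fin F1[OF q1] by (rule refl)
    also have "\<dots> = 1 - Pq q n * Sq q n (q * x)"
      using P by (simp add: right_diff_distrib)
    finally show ?thesis using x1 by (simp add: field_simps)
  qed
  have "(\<lambda>n. (1 - Pq q n * Sq q n (q * x)) / (1 - x)) \<longlonglongrightarrow> (1 - (1 / Wq q q) * Wq q (q * x)) / (1 - x)"
    by (intro tendsto_intros Pq_lim_W[OF q1] Sq_lim[OF q1] qx x1)
  then have "(\<lambda>n. (\<Sum>l=1..Suc n. x ^ (l - 1)) - a_seq (\<lambda>l. x ^ (l - 1)) q (Suc n))
     \<longlonglongrightarrow> (1 - (1 / Wq q q) * Wq q (q * x)) / (1 - x)" unfolding eq .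
  then have "(\<lambda>n. (\<Sum>l=1..n. x ^ (l - 1)) - a_seq (\<lambda>l. x ^ (l - 1)) q n)
     \<longlonglongrightarrow> (1 - (1 / Wq q q) * Wq q (q * x)) / (1 - x)" by (rule LIMSEQ_imp_Suc)
  moreover have "(1 - (1 / Wq q q) * Wq q (q * x)) / (1 - x) = 1 / (1 - x) - qpoch_inf q q / qpoch_inf x q"
    unfolding qpoch_q[OF q1] qpoch_x[OF q1 x]
    by (rule alg5[OF W_nz[OF q1 q1] W_nz[OF q1 qx] x1])
  ultimately show ?thesis by simp
qed

lemma E_lim_1: assumes x: "x = 1"
  shows "(\<lambda>n. (\<Sum>l=1..n. x ^ (l - 1)) - a_seq (\<lambda>l. x ^ (l - 1)) q n) \<longlonglongrightarrow> S0 q"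
proof -
  have eq: "(\<Sum>l=1..Suc n. x ^ (l - 1)) - a_seq (\<lambda>l. x ^ (l - 1)) q (Suc n) = Pq q n * Tq q n q" for n
  proof -
    have P: "Pq q n \<noteq> 0" by (rule Pq_nz[OF q1])
    have "of_nat (Suc n) = Pq q n * (of_nat (Suc n) / Pq q n)" using P by simp
    also have "\<dots> = Pq q n * Sq q n 1 + Pq q n * Tq q n q" unfolding F3[OF q1] by (simp add: distrib_left)
    finally have h: "of_nat (Suc n) = Pq q n * Sq q n 1 + Pq q n * Tq q n q" .
    have "(\<Sum>l=1..Suc n. x ^ (l - 1)) = of_nat (Suc n)" using x by simp
    then show ?thesis unfolding a_closed[OF q1] using h x by simp
  qed
  have "(\<lambda>n. Pq q n * Tq q n q) \<longlonglongrightarrow> (1 / Wq q q) * Uq q q"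
    by (intro tendsto_intros Pq_lim_W[OF q1] Tq_lim[OF q1] q1)
  moreover have "(1 / Wq q q) * Uq q q = S0 q"
  proof -
    have "Rq q q = S0 q" using sums_unique2[OF lambert_R[OF q1] lambert_S0[OF q1]] .
    then show ?thesis unfolding Rq_def by simp
  qed
  ultimately have "(\<lambda>n. (\<Sum>l=1..Suc n. x ^ (l - 1)) - a_seq (\<lambda>l. x ^ (l - 1)) q (Suc n)) \<longlonglongrightarrow> S0 q"
    unfolding eq by simp
  then show ?thesis by (rule LIMSEQ_imp_Suc)
qed

end

lemma zeta_nz: "zetaN N \<noteq> 0" by (simp add: zetaN_def)

lemma zeta_pow_N: assumes "N > 0" shows "zetaN N ^ N = 1"
proof -
  have "zetaN N ^ N = exp (of_nat N * (2 * of_real pi * \<i> / of_nat N))"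
    unfolding zetaN_def by (rule exp_of_nat_mult[symmetric])
  also have "\<dots> = exp (2 * of_real pi * \<i>)" using assms by simp
  finally show ?thesis by simp
qed

lemma zeta_norm: "norm (zetaN N ^ k) = 1"
  by (simp add: zetaN_def norm_power norm_exp_eq_Re)

lemma zeta_pow_ne1: assumes "0 < r" "r < N" shows "zetaN N ^ r \<noteq> 1"
proof
  assume h: "zetaN N ^ r = 1"
  have "zetaN N ^ r = exp (of_nat r * (2 * of_real pi * \<i> / of_nat N))"
    unfolding zetaN_def by (rule exp_of_nat_mult[symmetric])
  with h have "exp (of_nat r * (2 * of_real pi * \<i> / of_nat N)) = 1" by simp
  then obtain n :: int where n: "Im (of_nat r * (2 * of_real pi * \<i> / of_nat N)) = of_int (2 * n) * pi"
    unfolding exp_eq_1 by blast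
  have "Im (of_nat r * (2 * of_real pi * \<i> / of_nat N)) = 2 * pi * real r / real N"
    using assms by (simp add: Im_divide power2_eq_square field_simps)
  with n have "2 * pi * real r / real N = 2 * pi * of_int n" by (simp add: mult_ac)
  then have "real r = real N * of_int n" using assms by (simp add: field_simps)
  then have rn: "int r = int N * n" by (metis of_int_eq_iff of_int_mult of_int_of_nat_eq)
  show False
  proof (cases "n \<le> 0")
    case True
    then have "int N * n \<le> 0" by (simp add: mult_nonneg_nonpos)
    then show False using rn assms by simp
  next
    case False
    then have "int N * 1 \<le> int N * n" by (intro mult_left_mono) auto
    then have "int N \<le> int N * n" by (simp only: mult_1_right)
    then show False using rn assms by linarith
  qed
qed

lemma zeta_powi: assumes "N > 0" shows "zetaN N powi m = zetaN N ^ nat (m mod int N)"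
proof -
  let ?z = "zetaN N"
  have m: "m = m mod int N + int N * (m div int N)" by simp
  have "?z powi m = ?z powi (m mod int N) * ?z powi (int N * (m div int N))"
    by (subst m, rule power_int_add) (simp add: zeta_nz)
  also have "?z powi (int N * (m div int N)) = 1"
    by (simp add: power_int_mult zeta_pow_N[OF assms])
  also have "?z powi (m mod int N) = ?z ^ nat (m mod int N)"
  proof -
    have "m mod int N = int (nat (m mod int N))" using assms by simp
    then show ?thesis by (metis power_int_of_nat)
  qed
  finally show ?thesis by simp
qed

lemma periodic: fixes f :: "nat \<Rightarrow> 'a" and m :: nat
  assumes "\<And>n. f (n + N) = f n" shows "f (n + m * N) = f n"
proof (induction m arbitrary: n)
  case (Suc m)
  have "n + Suc m * N = (n + N) + m * N" by simp
  then show ?case using Suc.IH assms by metis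
qed simp

lemma pw: assumes "l \<ge> 1"
  shows "zetaN N powi ((1 - int j) * int k) * (zetaN N ^ k) ^ (l - 1) = (zetaN N powi (int l - int j)) ^ k"
proof -
  let ?z = "zetaN N"
  have "(?z ^ k) ^ (l - 1) = ?z powi (int k * int (l - 1))"
    by (metis power_int_of_nat power_int_mult)
  then have "?z powi ((1 - int j) * int k) * (?z ^ k) ^ (l - 1)
      = ?z powi ((1 - int j) * int k + int k * int (l - 1))"
    by (simp add: power_int_add zeta_nz)
  also have "(1 - int j) * int k + int k * int (l - 1) = (int l - int j) * int k"
    using assms by (simp add: of_nat_diff algebra_simps)
  also have "?z powi ((int l - int j) * int k) = (?z powi (int l - int j)) ^ k"
    by (metis power_int_of_nat power_int_mult)
  finally show ?thesis .
qed

lemma geo_zeta: assumes "N > 0"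
  shows "(\<Sum>k<N. (zetaN N powi m) ^ k) = (if m mod int N = 0 then of_nat N else 0)"
proof -
  let ?z = "zetaN N"
  define r where "r = nat (m mod int N)"
  have w: "zetaN N powi m = ?z ^ r" unfolding r_def by (rule zeta_powi[OF assms])
  have rN: "r < N" using assms unfolding r_def by (simp add: nat_less_iff)
  have wN: "(?z ^ r) ^ N = 1" by (simp add: power_mult[symmetric] mult.commute power_mult zeta_pow_N[OF assms])
  show ?thesis
  proof (cases "m mod int N = 0")
    case True
    then have "r = 0" by (simp add: r_def)
    then show ?thesis using True w by simp
  next
    case False
    have "0 \<le> m mod int N" using assms by simp
    then have "r > 0" unfolding r_def using False by simp
    then have ne: "?z ^ r \<noteq> 1" by (rule zeta_pow_ne1[OF _ rN])
    show ?thesis unfolding w sum_gp_strict using ne wN False by simp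
  qed
qed

lemma mod_char: assumes "N > 0" "l \<ge> 1" "j \<in> {1..N}"
  shows "((int l - int j) mod int N = 0) \<longleftrightarrow> j = (l - 1) mod N + 1"
proof -
  have "((int l - int j) mod int N = 0) \<longleftrightarrow> int N dvd (int (l - 1) - int (j - 1))"
    using assms by (simp add: of_nat_diff dvd_eq_mod_eq_0)
  also have "\<dots> \<longleftrightarrow> int (l - 1) mod int N = int (j - 1) mod int N"
    by (simp add: mod_eq_dvd_iff)
  also have "\<dots> \<longleftrightarrow> (l - 1) mod N = (j - 1) mod N"
    by (simp add: zmod_int[symmetric])
  also have "(j - 1) mod N = j - 1" by (rule mod_less) (use assms in auto)
  finally show ?thesis using assms by auto
qed

lemma inversion:
  assumes N: "N > 0" and per: "\<And>n. f (n + N) = f n" and l: "l \<ge> 1"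
  shows "f l = (\<Sum>k<N. cN f N (int k) * (zetaN N ^ k) ^ (l - 1))"
proof -
  let ?z = "zetaN N"
  define j0 where "j0 = (l - 1) mod N + 1"
  have j0: "j0 \<in> {1..N}" using N by (simp add: j0_def Suc_leI)
  have "(\<Sum>k<N. cN f N (int k) * (?z ^ k) ^ (l - 1))
      = (\<Sum>k<N. (1 / of_nat N) * (\<Sum>j=1..N. f j * (?z powi (int l - int j)) ^ k))"
  proof (intro sum.cong refl)
    fix k assume "k \<in> {..<N}"
    show "cN f N (int k) * (?z ^ k) ^ (l - 1) = (1 / of_nat N) * (\<Sum>j=1..N. f j * (?z powi (int l - int j)) ^ k)"
      unfolding cN_def mult.assoc sum_distrib_right
      by (intro arg_cong[where f="\<lambda>x. (1 / of_nat N) * x"] sum.cong refl) (simp only: mult.assoc pw[OF l])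
  qed
  also have "\<dots> = (1 / of_nat N) * (\<Sum>k<N. \<Sum>j=1..N. f j * (?z powi (int l - int j)) ^ k)"
    by (rule sum_distrib_left[symmetric])
  also have "\<dots> = (1 / of_nat N) * (\<Sum>j=1..N. \<Sum>k<N. f j * (?z powi (int l - int j)) ^ k)"
    by (subst sum.swap) (rule refl)
  also have "\<dots> = (1 / of_nat N) * (\<Sum>j=1..N. f j * (\<Sum>k<N. (?z powi (int l - int j)) ^ k))"
    by (simp only: sum_distrib_left)
  also have "\<dots> = (1 / of_nat N) * (\<Sum>j=1..N. (if j = j0 then f j * of_nat N else 0))"
    unfolding geo_zeta[OF N]
    by (intro arg_cong[where f="\<lambda>x. (1 / of_nat N) * x"] sum.cong refl)
       (use mod_char[OF N l] in \<open>auto simp: j0_def\<close>)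
  also have "\<dots> = f j0" using j0 N by simp
  also have "f j0 = f l"
  proof -
    have "l = j0 + ((l - 1) div N) * N" using l unfolding j0_def by simp
    then show ?thesis using periodic[of f N, OF per] by metis
  qed
  finally show ?thesis by simp
qed

lemma alg6: "(c::complex) * (1 / s - A / B) = c / s - A * (c / B)"
  by (simp add: algebra_simps)

theorem theorem1p3:
  fixes N :: nat and f :: "nat \<Rightarrow> complex" and q :: complex
  assumes "N > 0"
    and "\<And>n. f (n + N) = f n"
    and "norm q < 1"
  shows "(\<lambda>n. (\<Sum>l=1..n. f l) - a_seq f q n) \<longlonglongrightarrow>
           cN f N 0 * S0 q
           - qpoch_inf q q * (\<Sum>k=1..N-1. cN f N (int k) / qpoch_inf (zetaN N ^ k) q)
           + (\<Sum>k=1..N-1. cN f N (int k) / (1 - zetaN N ^ k))"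
proof -
  note N = assms(1) and per = assms(2) and q1 = assms(3)
  let ?z = "zetaN N"
  define c where "c k = cN f N (int k)" for k
  define Ek where "Ek k n = (\<Sum>l=1..n. (?z ^ k) ^ (l - 1)) - a_seq (\<lambda>l. (?z ^ k) ^ (l - 1)) q n" for k n
  have inv: "f l = (\<Sum>k<N. c k * (?z ^ k) ^ (l - 1))" if "l \<ge> 1" for l
    unfolding c_def by (rule inversion[of N f l, OF N per that])
  have alin: "a_seq f q n = (\<Sum>k<N. c k * a_seq (\<lambda>l. (?z ^ k) ^ (l - 1)) q n)" for n
  proof (induction n)
    case 0 then show ?case by simp
  next
    case (Suc n)
    have "a_seq f q (Suc n) = f (Suc n) + (1 - q ^ n) * a_seq f q n" by simp
    also have "\<dots> = (\<Sum>k<N. c k * (?z ^ k) ^ n) + (1 - q ^ n) * (\<Sum>k<N. c k * a_seq (\<lambda>l. (?z ^ k) ^ (l - 1)) q n)"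
      using inv[of "Suc n"] Suc.IH by simp
    also have "\<dots> = (\<Sum>k<N. c k * ((?z ^ k) ^ n + (1 - q ^ n) * a_seq (\<lambda>l. (?z ^ k) ^ (l - 1)) q n))"
      by (simp add: sum_distrib_left sum.distrib distrib_left mult.left_commute)
    also have "\<dots> = (\<Sum>k<N. c k * a_seq (\<lambda>l. (?z ^ k) ^ (l - 1)) q (Suc n))" by simp
    finally show ?case .
  qed
  have slin: "(\<Sum>l=1..n. f l) = (\<Sum>k<N. c k * (\<Sum>l=1..n. (?z ^ k) ^ (l - 1)))" for n
  proof -
    have "(\<Sum>l=1..n. f l) = (\<Sum>l=1..n. \<Sum>k<N. c k * (?z ^ k) ^ (l - 1))"
      by (intro sum.cong refl inv) auto
    also have "\<dots> = (\<Sum>k<N. \<Sum>l=1..n. c k * (?z ^ k) ^ (l - 1))" by (rule sum.swap)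
    also have "\<dots> = (\<Sum>k<N. c k * (\<Sum>l=1..n. (?z ^ k) ^ (l - 1)))" by (simp only: sum_distrib_left)
    finally show ?thesis .
  qed
  have dec: "(\<lambda>n. (\<Sum>l=1..n. f l) - a_seq f q n) = (\<lambda>n. \<Sum>k<N. c k * Ek k n)"
    unfolding slin alin Ek_def right_diff_distrib sum_subtractf by (rule refl)
  define L where "L k = (if k = 0 then S0 q else 1 / (1 - ?z ^ k) - qpoch_inf q q / qpoch_inf (?z ^ k) q)" for k
  have limk: "(\<lambda>n. c k * Ek k n) \<longlonglongrightarrow> c k * L k" if k: "k \<in> {..<N}" for k
  proof (cases "k = 0")
    case True
    have "(\<lambda>n. Ek 0 n) \<longlonglongrightarrow> S0 q"
      unfolding Ek_def by (rule E_lim_1[OF q1]) simp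
    then show ?thesis using True by (simp add: L_def tendsto_mult_left)
  next
    case False
    have "(\<lambda>n. Ek k n) \<longlonglongrightarrow> 1 / (1 - ?z ^ k) - qpoch_inf q q / qpoch_inf (?z ^ k) q"
      unfolding Ek_def
      by (rule E_lim_x[OF q1]) (use zeta_norm zeta_pow_ne1 False k in auto)
    then show ?thesis using False by (simp add: L_def tendsto_mult_left)
  qed
  have lim: "(\<lambda>n. \<Sum>k<N. c k * Ek k n) \<longlonglongrightarrow> (\<Sum>k<N. c k * L k)"
    by (rule tendsto_sum) (rule limk)
  obtain M where M: "N = Suc M" using N by (metis gr0_implies_Suc)
  have "(\<Sum>k<N. c k * L k) = c 0 * S0 q + (\<Sum>k<M. c (Suc k) * L (Suc k))"
    unfolding M sum.lessThan_Suc_shift by (simp add: L_def)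
  also have "(\<Sum>k<M. c (Suc k) * L (Suc k)) = (\<Sum>k<M. c (Suc k) / (1 - ?z ^ Suc k))
      - qpoch_inf q q * (\<Sum>k<M. c (Suc k) / qpoch_inf (?z ^ Suc k) q)"
    unfolding sum_distrib_left sum_subtractf[symmetric]
    by (intro sum.cong refl) (simp only: L_def alg6 nat.distinct if_False)
  also have "(\<Sum>k<M. c (Suc k) / (1 - ?z ^ Suc k)) = (\<Sum>k=1..N-1. cN f N (int k) / (1 - zetaN N ^ k))"
    unfolding M c_def by (simp add: sum.atLeast1_atMost_eq)
  also have "(\<Sum>k<M. c (Suc k) / qpoch_inf (?z ^ Suc k) q) = (\<Sum>k=1..N-1. cN f N (int k) / qpoch_inf (zetaN N ^ k) q)"
    unfolding M c_def by (simp add: sum.atLeast1_atMost_eq)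
  finally have "(\<Sum>k<N. c k * L k) = cN f N 0 * S0 q
           - qpoch_inf q q * (\<Sum>k=1..N-1. cN f N (int k) / qpoch_inf (zetaN N ^ k) q)
           + (\<Sum>k=1..N-1. cN f N (int k) / (1 - zetaN N ^ k))"
    by (simp add: c_def)
  then show ?thesis using lim dec by simp
qed

end
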